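(* Let $G=(V,E)$ be a directed acyclic graph with real edge weights, let $s_1,t_1,s_2,t_2\in V$, let $E_\cap=E(s_1,t_1)\cap E(s_2,t_2)$, and let $\mathcal{B}$ be the set of vertex sets of the connected components of the undirected graph on vertex set $V$ obtained from $(V,E_\cap)$ by ignoring edge directions. If $(P_1,P_2)\in\Pi(s_1,t_1)\times\Pi(s_2,t_2)$ is a pair of paths with $V(P_1)\cap V(P_2)\neq\emptyset$, then there is $B\in\mathcal{B}$ with $V(P_1)\cap V(P_2)\subseteq B$.
   Context: $\Pi(x,y)$ is the set of shortest (minimum weight) paths from $x$ to $y$; $E(x,y)$ is the set of edges lying on at least one path in $\Pi(x,y)$; $V(P)$ is the vertex set of path $P$. *)

theory Defs
  imports Complex_Main
begin

definition dag :: "'a set \<Rightarrow> ('a \<times> 'a) set \<Rightarrow> bool" where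
  "dag V E \<longleftrightarrow> finite V \<and> E \<subseteq> V \<times> V \<and> (\<forall>v. (v, v) \<notin> E\<^sup>+)"

definition is_path :: "('a \<times> 'a) set \<Rightarrow> 'a list \<Rightarrow> 'a \<Rightarrow> 'a \<Rightarrow> bool" where
  "is_path E p x y \<longleftrightarrow> p \<noteq> [] \<and> hd p = x \<and> last p = y \<and>
     (\<forall>i. Suc i < length p \<longrightarrow> (p ! i, p ! Suc i) \<in> E)"

definition path_edges :: "'a list \<Rightarrow> ('a \<times> 'a) set" where
  "path_edges p = set (zip p (tl p))"

definition path_weight :: "('a \<times> 'a \<Rightarrow> real) \<Rightarrow> 'a list \<Rightarrow> real" where
  "path_weight w p = (\<Sum>e\<leftarrow>zip p (tl p). w e)"

definition shortest_paths ::
  "('a \<times> 'a) set \<Rightarrow> ('a \<times> 'a \<Rightarrow> real) \<Rightarrow> 'a \<Rightarrow> 'a \<Rightarrow> 'a list set" where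
  "shortest_paths E w x y =
     {p. is_path E p x y \<and> (\<forall>q. is_path E q x y \<longrightarrow> path_weight w p \<le> path_weight w q)}"

definition sp_edges ::
  "('a \<times> 'a) set \<Rightarrow> ('a \<times> 'a \<Rightarrow> real) \<Rightarrow> 'a \<Rightarrow> 'a \<Rightarrow> ('a \<times> 'a) set" where
  "sp_edges E w x y = (\<Union>p\<in>shortest_paths E w x y. path_edges p)"

definition undirected_components :: "'a set \<Rightarrow> ('a \<times> 'a) set \<Rightarrow> 'a set set" where
  "undirected_components V F = V // (((F \<union> F\<inverse>)\<^sup>*) \<inter> (V \<times> V))"

end

theory Submission imports Defs begin

definition glue :: "'a list \<Rightarrow> 'a list \<Rightarrow> 'a list" where
  "glue xs ys = xs @ tl ys"

lemma zip_app: "xs \<noteq> [] \<Longrightarrow> zip (xs @ zs) (tl (xs @ zs)) = zip xs (tl xs) @ zip (last xs # zs) zs"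
proof (induction xs)
  case Nil then show ?case by simp
next
  case (Cons a xs) then show ?case by (cases xs) auto
qed

lemma zip_glue:
  assumes "xs \<noteq> []" "ys \<noteq> []" "last xs = hd ys"
  shows "zip (glue xs ys) (tl (glue xs ys)) = zip xs (tl xs) @ zip ys (tl ys)"
proof -
  have "ys = last xs # tl ys" using assms by (cases ys) auto
  then show ?thesis unfolding glue_def using zip_app[OF assms(1), of "tl ys"] by metis
qed

lemma pe_glue: "xs \<noteq> [] \<Longrightarrow> ys \<noteq> [] \<Longrightarrow> last xs = hd ys \<Longrightarrow>
   path_edges (glue xs ys) = path_edges xs \<union> path_edges ys"
  unfolding path_edges_def by (simp add: zip_glue)

lemma pw_glue: "xs \<noteq> [] \<Longrightarrow> ys \<noteq> [] \<Longrightarrow> last xs = hd ys \<Longrightarrow>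
   path_weight w (glue xs ys) = path_weight w xs + path_weight w ys"
  unfolding path_weight_def by (simp add: zip_glue)

lemma pe_char: "path_edges p = {(p!i, p!Suc i) | i. Suc i < length p}"
  unfolding path_edges_def
  apply (auto simp: in_set_zip nth_tl)
  subgoal for n by (rule exI[of _ n]) simp
  subgoal for i by (rule exI[of _ i]) (simp add: nth_tl)
  done

lemma is_path_alt: "is_path E p a b \<longleftrightarrow> p \<noteq> [] \<and> hd p = a \<and> last p = b \<and> path_edges p \<subseteq> E"
  unfolding is_path_def pe_char by auto

lemma glue_ne: "xs \<noteq> [] \<Longrightarrow> glue xs ys \<noteq> []" by (simp add: glue_def)

lemma is_path_glue:
  assumes "is_path E xs a b" "is_path E ys b c"
  shows "is_path E (glue xs ys) a c"
proof -
  have ne: "xs \<noteq> []" "ys \<noteq> []" "last xs = hd ys" using assms unfolding is_path_def by auto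
  have "last (glue xs ys) = c"
  proof (cases "tl ys = []")
    case True
    then have "ys = [hd ys]" using ne by (cases ys) auto
    then show ?thesis using assms ne unfolding glue_def is_path_def by (metis True append_Nil2 last.simps)
  next
    case False
    then have "last (tl ys) = last ys" using ne by (cases ys) auto
    then show ?thesis using assms False unfolding glue_def is_path_def by simp
  qed
  moreover have "hd (glue xs ys) = a" using assms ne unfolding glue_def is_path_def by simp
  ultimately show ?thesis using assms ne pe_glue[OF ne] glue_ne[OF ne(1)]
    unfolding is_path_alt by auto
qed

definition seg :: "'a list \<Rightarrow> nat \<Rightarrow> nat \<Rightarrow> 'a list" where
  "seg p i j = drop i (take (Suc j) p)"

lemma decomp: "i \<le> j \<Longrightarrow> j < length p \<Longrightarrow>
  p = glue (glue (take (Suc i) p) (seg p i j)) (drop j p)"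
proof -
  assume a: "i \<le> j" "j < length p"
  have "glue (take (Suc i) p) (seg p i j) = take (Suc j) p"
    unfolding glue_def seg_def using a
    by (metis Suc_le_mono append_take_drop_id drop_Suc le_SucI take_take min_absorb1 tl_drop)
  moreover have "take (Suc j) p @ tl (drop j p) = p" by (metis append_take_drop_id drop_Suc tl_drop)
  ultimately show ?thesis unfolding glue_def by simp
qed

lemma path_take: "is_path E p a b \<Longrightarrow> i < length p \<Longrightarrow> is_path E (take (Suc i) p) a (p!i)"
  unfolding is_path_def by (auto simp: hd_conv_nth last_conv_nth min_def; subgoal_tac "i = length p - 1"; simp)

lemma path_drop: "is_path E p a b \<Longrightarrow> i < length p \<Longrightarrow> is_path E (drop i p) (p!i) b"
  unfolding is_path_def by (auto simp: hd_drop_conv_nth)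

lemma path_seg: "is_path E p a b \<Longrightarrow> i \<le> j \<Longrightarrow> j < length p \<Longrightarrow> is_path E (seg p i j) (p!i) (p!j)"
  unfolding is_path_def seg_def by (auto simp: hd_drop_conv_nth last_conv_nth min_def; subgoal_tac "j = length p - 1"; simp)

lemma length_seg: "i \<le> j \<Longrightarrow> j < length p \<Longrightarrow> length (seg p i j) = Suc (j - i)"
  unfolding seg_def by simp

lemma path_rtrancl: "is_path E p a b \<Longrightarrow> (a, b) \<in> (path_edges p)\<^sup>*"
proof (induction p arbitrary: a)
  case Nil then show ?case by (simp add: is_path_def)
next
  case (Cons c q)
  show ?case
  proof (cases q)
    case Nil then show ?thesis using Cons.prems by (auto simp: is_path_def path_edges_def)
  next
    case (Cons d r)
    have "is_path E q d b" using Cons.prems Cons unfolding is_path_alt path_edges_def by auto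
    then have "(d, b) \<in> (path_edges q)\<^sup>*" using Cons.IH by blast
    moreover have "path_edges (c # q) = insert (c, d) (path_edges q)" using Cons
      unfolding path_edges_def by simp
    moreover have "a = c" using Cons.prems by (simp add: is_path_def)
    ultimately show ?thesis
      by (metis converse_rtrancl_into_rtrancl insertI1 rtrancl_mono subset_insertI subsetD)
  qed
qed

lemma path_trancl: "is_path E p a b \<Longrightarrow> length p \<ge> 2 \<Longrightarrow> (a, b) \<in> (path_edges p)\<^sup>+"
proof -
  assume a: "is_path E p a b" "length p \<ge> 2"
  then obtain d r where p: "p = a # d # r" unfolding is_path_def
    by (cases p; cases "tl p") auto
  have "is_path E (d # r) d b" using a p unfolding is_path_alt path_edges_def by auto
  then have "(d, b) \<in> (path_edges (d # r))\<^sup>*" by (rule path_rtrancl)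
  moreover have "path_edges p = insert (a, d) (path_edges (d # r))" using p
    unfolding path_edges_def by simp
  ultimately show ?thesis
    by (metis r_into_trancl' rtrancl_mono rtrancl_into_trancl2 insertI1 subset_insertI subsetD)
qed

lemma pw_glue_path: "is_path E xs a b \<Longrightarrow> is_path E ys b c \<Longrightarrow>
   path_weight w (glue xs ys) = path_weight w xs + path_weight w ys"
  by (rule pw_glue) (auto simp: is_path_def)

lemma pe_glue_path: "is_path E xs a b \<Longrightarrow> is_path E ys b c \<Longrightarrow>
   path_edges (glue xs ys) = path_edges xs \<union> path_edges ys"
  by (rule pe_glue) (auto simp: is_path_def)

lemma path_in_V: "is_path E p a b \<Longrightarrow> E \<subseteq> V \<times> V \<Longrightarrow> a \<in> V \<Longrightarrow> set p \<subseteq> V"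
proof
  fix x assume a: "is_path E p a b" "E \<subseteq> V \<times> V" "a \<in> V" "x \<in> set p"
  then obtain n where n: "n < length p" "p ! n = x" by (auto simp: in_set_conv_nth)
  show "x \<in> V"
  proof (cases n)
    case 0 then show ?thesis using a n by (auto simp: is_path_def hd_conv_nth)
  next
    case (Suc m)
    then have "(p!m, p!n) \<in> E" using a n unfolding is_path_def by auto
    then show ?thesis using a n by auto
  qed
qed

lemma parts:
  assumes p: "is_path E p a b" and ij: "i \<le> j" "j < length p"
  shows "is_path E (take (Suc i) p) a (p!i)" "is_path E (seg p i j) (p!i) (p!j)"
    "is_path E (drop j p) (p!j) b"
    "path_weight w p = path_weight w (take (Suc i) p) + path_weight w (seg p i j) + path_weight w (drop j p)"
    "path_edges (seg p i j) \<subseteq> path_edges p"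
proof -
  show A: "is_path E (take (Suc i) p) a (p!i)" using path_take[OF p] ij by simp
  show S: "is_path E (seg p i j) (p!i) (p!j)" using path_seg[OF p ij] .
  show C: "is_path E (drop j p) (p!j) b" using path_drop[OF p] ij by simp
  have AS: "is_path E (glue (take (Suc i) p) (seg p i j)) a (p!j)" by (rule is_path_glue[OF A S])
  have "path_weight w p = path_weight w (glue (glue (take (Suc i) p) (seg p i j)) (drop j p))"
    using decomp[OF ij] by simp
  also have "\<dots> = path_weight w (take (Suc i) p) + path_weight w (seg p i j) + path_weight w (drop j p)"
    using pw_glue_path[OF AS C] pw_glue_path[OF A S] by simp
  finally show "path_weight w p = path_weight w (take (Suc i) p) + path_weight w (seg p i j) + path_weight w (drop j p)" .
  have "path_edges p = path_edges (glue (glue (take (Suc i) p) (seg p i j)) (drop j p))"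
    using decomp[OF ij] by simp
  also have "\<dots> = path_edges (take (Suc i) p) \<union> path_edges (seg p i j) \<union> path_edges (drop j p)"
    using pe_glue_path[OF AS C] pe_glue_path[OF A S] by simp
  finally show "path_edges (seg p i j) \<subseteq> path_edges p" by blast
qed

lemma exchange:
  assumes P1: "P1 \<in> shortest_paths E w s1 t1" and P2: "is_path E P2 s2 t2"
    and ij: "i \<le> j" "j < length P1" and kl: "k \<le> l" "l < length P2"
    and x: "P1!i = P2!k" and y: "P1!j = P2!l"
  shows "path_weight w (seg P1 i j) \<le> path_weight w (seg P2 k l)"
    "path_weight w (seg P1 i j) = path_weight w (seg P2 k l) \<Longrightarrow> path_edges (seg P2 k l) \<subseteq> sp_edges E w s1 t1"
proof -
  have p1: "is_path E P1 s1 t1" and m1: "\<And>q. is_path E q s1 t1 \<Longrightarrow> path_weight w P1 \<le> path_weight w q"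
    using P1 unfolding shortest_paths_def by auto
  note a = parts[OF p1 ij] and a4 = parts(4)[where w=w, OF p1 ij]
  note b = parts[OF P2 kl]
  have S2: "is_path E (seg P2 k l) (P1!i) (P1!j)" using b(2) x y by simp
  have AS: "is_path E (glue (take (Suc i) P1) (seg P2 k l)) s1 (P1!j)" by (rule is_path_glue[OF a(1) S2])
  define Q where "Q = glue (glue (take (Suc i) P1) (seg P2 k l)) (drop j P1)"
  have Q: "is_path E Q s1 t1" unfolding Q_def by (rule is_path_glue[OF AS a(3)])
  have wQ: "path_weight w Q = path_weight w (take (Suc i) P1) + path_weight w (seg P2 k l) + path_weight w (drop j P1)"
    unfolding Q_def using pw_glue_path[OF AS a(3)] pw_glue_path[OF a(1) S2] by simp
  have eQ: "path_edges (seg P2 k l) \<subseteq> path_edges Q"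
    unfolding Q_def using pe_glue_path[OF AS a(3)] pe_glue_path[OF a(1) S2] by blast
  show "path_weight w (seg P1 i j) \<le> path_weight w (seg P2 k l)"
    using m1[OF Q] wQ a4 by simp
  assume "path_weight w (seg P1 i j) = path_weight w (seg P2 k l)"
  then have "path_weight w Q = path_weight w P1" using wQ a4 by simp
  then have "Q \<in> shortest_paths E w s1 t1" using Q m1 unfolding shortest_paths_def by auto
  then show "path_edges (seg P2 k l) \<subseteq> sp_edges E w s1 t1" using eQ unfolding sp_edges_def by blast
qed

lemma key:
  assumes P1: "P1 \<in> shortest_paths E w s1 t1" and P2: "P2 \<in> shortest_paths E w s2 t2"
    and ij: "i \<le> j" "j < length P1" and kl: "k \<le> l" "l < length P2"
    and x: "P1!i = P2!k" and y: "P1!j = P2!l"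
  shows "(P1!i, P1!j) \<in> (sp_edges E w s1 t1 \<inter> sp_edges E w s2 t2)\<^sup>*"
proof -
  have p1: "is_path E P1 s1 t1" and p2: "is_path E P2 s2 t2"
    using P1 P2 unfolding shortest_paths_def by auto
  have e1: "path_weight w (seg P1 i j) \<le> path_weight w (seg P2 k l)"
    by (rule exchange(1)[OF P1 p2 ij kl x y])
  have e2: "path_weight w (seg P2 k l) \<le> path_weight w (seg P1 i j)"
    by (rule exchange(1)[OF P2 p1 kl ij x[symmetric] y[symmetric]])
  have s1: "path_edges (seg P2 k l) \<subseteq> sp_edges E w s1 t1"
    using exchange(2)[OF P1 p2 ij kl x y] e1 e2 by simp
  have s2: "path_edges (seg P2 k l) \<subseteq> sp_edges E w s2 t2"
    using parts(5)[OF p2 kl] P2 unfolding sp_edges_def by blast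
  have "(P2!k, P2!l) \<in> (path_edges (seg P2 k l))\<^sup>*"
    by (rule path_rtrancl[OF parts(2)[OF p2 kl]])
  then show ?thesis using s1 s2 x y
    by (metis Int_greatest rtrancl_mono subsetD)
qed

lemma seg_trancl:
  assumes p: "is_path E p a b" and ij: "i < j" "j < length p"
  shows "(p!i, p!j) \<in> E\<^sup>+"
proof -
  have "(p!i, p!j) \<in> (path_edges (seg p i j))\<^sup>+"
    using path_trancl[OF parts(2)[OF p _ ij(2)]] ij length_seg[of i j p] by simp
  moreover have "path_edges (seg p i j) \<subseteq> E" using parts(2)[OF p _ ij(2)] ij
    unfolding is_path_alt by simp
  ultimately show ?thesis using trancl_mono by blast
qed

lemma seg_rtrancl:
  assumes p: "is_path E p a b" and ij: "i \<le> j" "j < length p"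
  shows "(p!i, p!j) \<in> E\<^sup>*"
  using seg_trancl[OF p _ ij(2)] ij by (cases "i = j") (auto intro: trancl_into_rtrancl)

theorem lemma18:
  fixes V :: "'a set" and E :: "('a \<times> 'a) set" and w :: "'a \<times> 'a \<Rightarrow> real"
    and s1 t1 s2 t2 :: 'a and P1 P2 :: "'a list"
  assumes "dag V E"
    and "s1 \<in> V" "t1 \<in> V" "s2 \<in> V" "t2 \<in> V"
    and "P1 \<in> shortest_paths E w s1 t1"
    and "P2 \<in> shortest_paths E w s2 t2"
    and "set P1 \<inter> set P2 \<noteq> {}"
  shows "\<exists>B \<in> undirected_components V (sp_edges E w s1 t1 \<inter> sp_edges E w s2 t2).
           set P1 \<inter> set P2 \<subseteq> B"
proof -
  let ?F = "sp_edges E w s1 t1 \<inter> sp_edges E w s2 t2"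
  let ?R = "(?F \<union> ?F\<inverse>)\<^sup>*"
  have p1: "is_path E P1 s1 t1" and p2: "is_path E P2 s2 t2"
    using assms(6,7) unfolding shortest_paths_def by auto
  have EV: "E \<subseteq> V \<times> V" and acyc: "\<And>v. (v, v) \<notin> E\<^sup>+" using assms(1) unfolding dag_def by auto
  have V1: "set P1 \<subseteq> V" by (rule path_in_V[OF p1 EV assms(2)])
  have conn: "(x, y) \<in> ?R" if xs: "x \<in> set P1 \<inter> set P2" and ys: "y \<in> set P1 \<inter> set P2" for x y
  proof -
    obtain i where i: "i < length P1" "P1!i = x" using xs by (auto simp: in_set_conv_nth)
    obtain j where j: "j < length P1" "P1!j = y" using ys by (auto simp: in_set_conv_nth)
    obtain k where k: "k < length P2" "P2!k = x" using xs by (auto simp: in_set_conv_nth)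
    obtain l where l: "l < length P2" "P2!l = y" using ys by (auto simp: in_set_conv_nth)
    have mono: "?F\<^sup>* \<subseteq> ?R" by (rule rtrancl_mono) blast
    show ?thesis
    proof (cases "i \<le> j")
      case True
      show ?thesis
      proof (cases "k \<le> l")
        case True
        have "(x, y) \<in> ?F\<^sup>*" using key[OF assms(6,7) \<open>i \<le> j\<close> j(1) True l(1)] i j k l by simp
        then show ?thesis using mono by blast
      next
        case False
        have "(y, x) \<in> E\<^sup>+" using seg_trancl[OF p2, of l k] False k l by simp
        moreover have "(x, y) \<in> E\<^sup>*" using seg_rtrancl[OF p1 \<open>i \<le> j\<close> j(1)] i j by simp
        ultimately have "(y, y) \<in> E\<^sup>+" by simp
        then show ?thesis using acyc by blast
      qed
    next
      case False
      show ?thesis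
      proof (cases "l \<le> k")
        case True
        have "(y, x) \<in> ?F\<^sup>*" using key[OF assms(6,7), of j i l k] False True i j k l by simp
        then have "(y, x) \<in> ?R" using mono by blast
        then have "(x, y) \<in> ?R\<inverse>" by simp
        moreover have "?R\<inverse> = ?R"
          by (metis converse_Un converse_converse rtrancl_converse sup_commute)
        ultimately show ?thesis by simp
      next
        case F2: False
        have "(x, y) \<in> E\<^sup>+" using seg_trancl[OF p2, of k l] F2 k l by simp
        moreover have "(y, x) \<in> E\<^sup>*" using seg_rtrancl[OF p1, of j i] False i j by simp
        ultimately have "(x, x) \<in> E\<^sup>+" by simp
        then show ?thesis using acyc by blast
      qed
    qed
  qed
  obtain x0 where x0: "x0 \<in> set P1 \<inter> set P2" using assms(8) by blast
  let ?B = "(?R \<inter> V \<times> V) `` {x0}"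
  have "?B \<in> undirected_components V ?F"
    unfolding undirected_components_def using x0 V1 by (intro quotientI) auto
  moreover have "set P1 \<inter> set P2 \<subseteq> ?B"
    using conn x0 V1 by blast
  ultimately show ?thesis by blast
qed

end
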